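(* Let $n\ge2$. (1) The set $X=\overline{(1+2^n)^{\mathbb{N}}}$ equals $1+2^n\mathbb{N}_0$ and $i(X)=2^{n-1}$. (2) The set $Y=\overline{(-1+2^n)^{\mathbb{N}}}$ equals $(1+2^{n+1}\mathbb{N}_0)\cup(2^n-1+2^{n+1}\mathbb{N}_0)$ and $i(Y)=2^{n-1}$.
   Context: $\mathbb{N}=\{1,2,\dots\}$, $\mathbb{N}_0=\{0\}\cup\mathbb{N}$, $x^{\mathbb{N}}=\{x^k:k\in\mathbb{N}\}$. Closures are taken in the $2$-adic topology on $\mathbb{N}\setminus2\mathbb{N}$ (generated by the sets $x+2^m\mathbb{N}_0$). $\mathbb{Z}_{2^m}^\times$ is the unit group of $\mathbb{Z}/2^m\mathbb{Z}$, $\pi_m:\mathbb{N}\to\mathbb{Z}/2^m\mathbb{Z}$, $x\mapsto x+2^m\mathbb{Z}$. For $X$ of the form $\overline{b^{\mathbb{N}}}$ with $b$ odd, $b\ne1$: $n(X)=\min\{m\in\mathbb{N}:X=\pi_m^{-1}(\pi_m(X)),\ |\pi_m(X)|\ge3\}$ and $i(X)$ is the index of $\pi_{n(X)}(X)$ in $\mathbb{Z}_{2^{n(X)}}^\times$. *)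

theory Defs
  imports "HOL-Number_Theory.Number_Theory"
begin

definition pows :: "nat \<Rightarrow> nat set" where
  "pows b = {b ^ k | k. k \<ge> 1}"

text \<open>Closure in the 2-adic topology on the odd positive integers:
  y is in the closure of S iff every 2-adic neighbourhood y + 2^m Z of y meets S.\<close>
definition two_adic_closure :: "nat set \<Rightarrow> nat set" where
  "two_adic_closure S = {y. odd y \<and> (\<forall>m::nat. \<exists>s\<in>S. [s = y] (mod 2 ^ m))}"

definition pi_img :: "nat \<Rightarrow> nat set \<Rightarrow> nat set" where
  "pi_img m X = (\<lambda>x. x mod 2 ^ m) ` X"

definition pi_preimage :: "nat \<Rightarrow> nat set \<Rightarrow> nat set" where
  "pi_preimage m A = {x. x \<ge> 1 \<and> x mod 2 ^ m \<in> A}"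

definition units_mod :: "nat \<Rightarrow> nat set" where
  "units_mod m = {u. u < 2 ^ m \<and> coprime u (2 ^ m)}"

definition n_of :: "nat set \<Rightarrow> nat" where
  "n_of X = (LEAST m. m \<ge> 1 \<and> X = pi_preimage m (pi_img m X) \<and> card (pi_img m X) \<ge> 3)"

definition i_of :: "nat set \<Rightarrow> nat" where
  "i_of X = card (units_mod (n_of X)) div card (pi_img (n_of X) X)"

end

theory Submission
  imports Defs
begin

lemma sq_step:
  fixes c :: int
  assumes "t \<ge> 2" "odd c"
  shows "\<exists>c'. odd c' \<and> (1 + 2^t*c)^(2^j) = 1 + 2^(t+j)*c'"
proof (induction j)
  case 0 then show ?case using assms by auto
next
  case (Suc j)
  then obtain c' where c': "odd c'" "(1 + 2^t*c)^(2^j) = 1 + 2^(t+j)*c'" by blast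
  obtain r where r: "t + j = Suc r" "r \<ge> 1" using assms(1) by (metis Suc_diff_1 add_leE diff_is_0_eq' not_gr0 not_less_eq_eq numeral_2_eq_2 zero_less_diff)
  have "(1 + 2^t*c)^(2^Suc j) = ((1 + 2^t*c)^(2^j))^2"
    by (simp add: power_mult[symmetric] mult.commute)
  also have "\<dots> = 1 + 2^(t + Suc j) * (c' + 2^r * c'^2)"
    unfolding c'(2) using r(1) by (simp add: power2_eq_square algebra_simps power_add)
  finally have e: "(1 + 2^t*c)^(2^Suc j) = 1 + 2^(t + Suc j) * (c' + 2^r * c'^2)" .
  have "odd (c' + 2^r * c'^2)" using c'(1) r(2) by simp
  with e show ?case by blast
qed

lemma cover:
  fixes c u y :: int
  assumes "t \<ge> 2" "odd c" "odd u" "(2::int)^t dvd (y - u)"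
  shows "\<exists>k\<ge>1. (2::int)^m dvd (u * (1 + 2^t*c)^k - y)"
proof (induction m)
  case 0 then show ?case by auto
next
  case (Suc m)
  define a where "a = 1 + 2^t*c"
  show ?case
  proof (cases "Suc m \<le> t")
    case True
    have "u * a^1 - y = -(y - u) + 2^t * (u*c)" by (simp add: a_def algebra_simps)
    hence "(2::int)^t dvd (u * a^1 - y)" using assms(4) by (metis dvd_add dvd_minus_iff dvd_triv_left)
    moreover have "(2::int)^Suc m dvd 2^t" using True by (metis le_imp_power_dvd)
    ultimately show ?thesis unfolding a_def by (meson dvd_trans order_refl)
  next
    case False
    then have mt: "t \<le> m" by simp
    from Suc.IH obtain k q where k: "k \<ge> 1" "u * a^k - y = 2^m * q" unfolding a_def by (auto elim!: dvdE)
    show ?thesis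
    proof (cases "even q")
      case True
      then obtain q' where "q = 2*q'" by (meson evenE)
      then have "u * a^k - y = 2^Suc m * q'" using k(2) by simp
      then show ?thesis using k(1) unfolding a_def by (metis dvd_triv_left)
    next
      case False
      obtain c' where c': "odd c'" "a^(2^(m-t)) = 1 + 2^(t+(m-t))*c'"
        using sq_step[OF assms(1,2)] unfolding a_def by blast
      have am: "a^(2^(m-t)) = 1 + 2^m*c'" using c' mt by simp
      have "u * a^(k + 2^(m-t)) - y = (u*a^k - y) + 2^m * (u*a^k*c')"
        by (simp add: power_add am algebra_simps)
      also have "\<dots> = 2^m * (q + u*a^k*c')" using k(2) by (simp add: algebra_simps)
      finally have e: "u * a^(k + 2^(m-t)) - y = 2^m * (q + u*a^k*c')" .
      have oa: "odd a" unfolding a_def using assms(1) by simp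
      have "even (q + u*a^k*c')" using False oa assms(3) c'(1) by simp
      then obtain q' where "q + u*a^k*c' = 2*q'" by (meson evenE)
      with e have "u * a^(k + 2^(m-t)) - y = 2^Suc m * q'" by simp
      then show ?thesis unfolding a_def by (metis dvd_triv_left le_add1 k(1) order_trans)
    qed
  qed
qed

lemma dvd_to_cong: "(2::int)^m dvd (int s - int y) \<Longrightarrow> [s = y] (mod 2^m)"
  by (metis cong_iff_dvd_diff cong_int_iff of_nat_numeral of_nat_power)

lemma mod_decomp: "x mod M = r \<Longrightarrow> x = r + M * (x div M)" for x M r :: nat
  by (metis mod_mult_div_eq add.commute)

lemma pi_img_le:
  assumes "\<forall>x\<in>X. x mod 2^M \<in> R" "finite R" "m \<le> M"
  shows "card (pi_img m X) \<le> card R"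
proof -
  have "pi_img m X \<subseteq> (\<lambda>z. z mod 2^m) ` R"
  proof
    fix z assume "z \<in> pi_img m X"
    then obtain x where x: "x \<in> X" "z = x mod 2^m" unfolding pi_img_def by auto
    have "(2::nat)^m dvd 2^M" using assms(3) by (metis le_imp_power_dvd)
    then have "z = (x mod 2^M) mod 2^m" using x by (simp add: mod_mod_cancel)
    then show "z \<in> (\<lambda>z. z mod 2^m) ` R" using assms(1) x(1) by auto
  qed
  then have "card (pi_img m X) \<le> card ((\<lambda>z. z mod 2^m) ` R)"
    using assms(2) by (simp add: card_mono)
  also have "\<dots> \<le> card R" using card_image_le assms(2) by blast
  finally show ?thesis .
qed

lemma preim:
  assumes "X = {x. x \<ge> 1 \<and> x mod 2^M \<in> R}" "M \<le> m"
  shows "X = pi_preimage m (pi_img m X)"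
proof
  show "X \<subseteq> pi_preimage m (pi_img m X)"
    using assms(1) unfolding pi_preimage_def pi_img_def by auto
  show "pi_preimage m (pi_img m X) \<subseteq> X"
  proof
    fix x assume "x \<in> pi_preimage m (pi_img m X)"
    then obtain x' where x': "x \<ge> 1" "x' \<in> X" "x mod 2^m = x' mod 2^m"
      unfolding pi_preimage_def pi_img_def by auto
    have d: "(2::nat)^M dvd 2^m" using assms(2) by (metis le_imp_power_dvd)
    have "x mod 2^M = x' mod 2^M"
      using x'(3) d by (metis mod_mod_cancel)
    then show "x \<in> X" using x' assms(1) by auto
  qed
qed

lemma n_of_eq:
  assumes "X = {x. x \<ge> 1 \<and> x mod 2^M \<in> R}" "M \<le> N" "N \<ge> 1"
    "\<forall>x\<in>X. x mod 2^(N-1) \<in> R'" "finite R'" "card R' \<le> 2"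
    "card (pi_img N X) \<ge> 3"
  shows "n_of X = N"
  unfolding n_of_def
proof (rule Least_equality)
  show "N \<ge> 1 \<and> X = pi_preimage N (pi_img N X) \<and> card (pi_img N X) \<ge> 3"
    using assms preim by blast
  fix m assume m: "m \<ge> 1 \<and> X = pi_preimage m (pi_img m X) \<and> card (pi_img m X) \<ge> 3"
  show "N \<le> m"
  proof (rule ccontr)
    assume "\<not> N \<le> m"
    then have "m \<le> N - 1" by simp
    then have "card (pi_img m X) \<le> card R'" using pi_img_le assms(4,5) by blast
    then show False using m assms(6) by simp
  qed
qed

lemma units_card: "m \<ge> 1 \<Longrightarrow> card (units_mod m) = 2^(m-1)"
proof -
  assume m: "m \<ge> 1"
  have "units_mod m = totatives (2^m)"
  proof -
    have "u \<noteq> 2^m" if "odd u" for u :: nat using m that by auto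
    then show ?thesis unfolding units_mod_def totatives_def using m
      by (auto simp: odd_pos le_less)
  qed
  then have "card (units_mod m) = totient (2^m)" by (simp add: totient_def)
  also have "\<dots> = 2^(m-1)" using m by (simp add: totient_prime_power)
  finally show ?thesis .
qed

lemma closX:
  assumes "n \<ge> 2"
  shows "two_adic_closure (pows (1 + 2 ^ n)) = {1 + 2 ^ n * k | k. True}"
proof
  show "two_adic_closure (pows (1 + 2 ^ n)) \<subseteq> {1 + 2 ^ n * k | k. True}"
  proof
    fix y assume "y \<in> two_adic_closure (pows (1 + 2 ^ n))"
    then obtain k where k: "[(1 + 2^n)^k = y] (mod 2^n)"
      unfolding two_adic_closure_def pows_def by blast
    have "[1 + 2^n = 1] (mod (2::nat)^n)" unfolding cong_def by (rule mod_add_self2)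
    then have "[(1 + 2^n)^k = 1^k] (mod (2::nat)^n)" by (rule cong_pow)
    then have "[y = 1] (mod 2^n)" using k by (metis cong_sym cong_trans power_one)
    then have "y mod 2^n = 1" using assms by (simp add: cong_def)
    then have "y = 1 + 2^n * (y div 2^n)" by (rule mod_decomp)
    then show "y \<in> {1 + 2 ^ n * k | k. True}" by blast
  qed
  show "{1 + 2 ^ n * k | k. True} \<subseteq> two_adic_closure (pows (1 + 2 ^ n))"
  proof
    fix y assume "y \<in> {1 + 2 ^ n * k | k::nat. True}"
    then obtain k where y: "y = 1 + 2^n * k" by blast
    have "odd y" using y assms by simp
    moreover have "\<exists>s\<in>pows (1 + 2^n). [s = y] (mod 2 ^ m)" for m
    proof -
      have "(2::int)^n dvd (int y - 1)" using y by simp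
      then obtain j where j: "j \<ge> 1" "(2::int)^m dvd (1 * (1 + 2^n*1)^j - int y)"
        using cover[of n 1 1 "int y" m] assms by (simp del: One_nat_def) blast
      then have "[(1 + 2^n)^j = y] (mod 2^m)" by (intro dvd_to_cong) simp
      moreover have "(1 + 2^n)^j \<in> pows (1 + 2^n)" using j(1) unfolding pows_def by blast
      ultimately show ?thesis by blast
    qed
    ultimately show "y \<in> two_adic_closure (pows (1 + 2 ^ n))"
      unfolding two_adic_closure_def by blast
  qed
qed

lemma b_sq:
  assumes "n \<ge> 2"
  shows "int ((2^n - 1)^2) = 1 + 2^(n+1) * (2^(n-1) - 1)" "odd ((2::int)^(n-1) - 1)"
proof -
  obtain r where r: "n = Suc r" "r \<ge> 1" using assms by (cases n) auto
  have "int ((2^n - 1)^2) = (2^n - 1)^2" by (simp add: of_nat_diff)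
  also have "\<dots> = 1 + 2^(n+1) * (2^(n-1) - 1)"
    using r by (simp add: power2_eq_square algebra_simps)
  finally show "int ((2^n - 1)^2) = 1 + 2^(n+1) * (2^(n-1) - 1)" .
  show "odd ((2::int)^(n-1) - 1)" using r by simp
qed

lemma closY:
  assumes "n \<ge> 2"
  shows "two_adic_closure (pows (2 ^ n - 1)) =
             {1 + 2 ^ (n + 1) * k | k. True} \<union> {2 ^ n - 1 + 2 ^ (n + 1) * k | k. True}"
proof
  define b :: nat where "b = 2^n - 1"
  have bsq: "[b^2 = 1] (mod 2^(n+1))"
    using b_sq[OF assms] unfolding b_def by (intro dvd_to_cong) simp
  have "(2::nat)^n < 2^(n+1)" by simp
  then have blt: "b < 2^(n+1)" unfolding b_def by linarith
  show "two_adic_closure (pows (2 ^ n - 1)) \<subseteq> {1 + 2 ^ (n + 1) * k | k. True} \<union> {2 ^ n - 1 + 2 ^ (n + 1) * k | k. True}"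
  proof
    fix y assume "y \<in> two_adic_closure (pows (2 ^ n - 1))"
    then obtain k where k: "[b^k = y] (mod 2^(n+1))"
      unfolding two_adic_closure_def pows_def b_def by blast
    define j where "j = k div 2"
    have "k = 2*j \<or> k = 2*j+1" unfolding j_def by presburger
    then have "[b^k = 1] (mod 2^(n+1)) \<or> [b^k = b] (mod 2^(n+1))"
    proof
      assume "k = 2*j"
      then have "b^k = (b^2)^j" by (simp add: power_mult)
      moreover have "[(b^2)^j = 1^j] (mod 2^(n+1))" using bsq by (rule cong_pow)
      ultimately show ?thesis by simp
    next
      assume "k = 2*j+1"
      then have "b^k = b * (b^2)^j" by (simp add: power_mult)
      moreover have "[(b^2)^j = 1^j] (mod 2^(n+1))" using bsq by (rule cong_pow)
      then have "[b * (b^2)^j = b * 1] (mod 2^(n+1))" using cong_scalar_left by (metis power_one)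
      ultimately show ?thesis by simp
    qed
    then have "[y = 1] (mod 2^(n+1)) \<or> [y = b] (mod 2^(n+1))"
      using k by (meson cong_sym cong_trans)
    note disj = this
    have "(1::nat) < 2^(n+1)" by (rule one_less_power) simp_all
    from disj have "y mod 2^(n+1) = 1 \<or> y mod 2^(n+1) = b"
    proof
      assume "[y = 1] (mod 2^(n+1))"
      then have "y mod 2^(n+1) = 1 mod 2^(n+1)" unfolding cong_def .
      also have "\<dots> = 1" using \<open>(1::nat) < 2^(n+1)\<close> by (rule mod_less)
      finally show ?thesis by (rule disjI1)
    next
      assume "[y = b] (mod 2^(n+1))"
      then have "y mod 2^(n+1) = b mod 2^(n+1)" unfolding cong_def .
      also have "\<dots> = b" using blt by (rule mod_less)
      finally show ?thesis by (rule disjI2)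
    qed
    then show "y \<in> {1 + 2 ^ (n + 1) * k | k. True} \<union> {2 ^ n - 1 + 2 ^ (n + 1) * k | k. True}"
    proof
      assume "y mod 2^(n+1) = 1"
      then have "y = 1 + 2^(n+1) * (y div 2^(n+1))" by (rule mod_decomp)
      then show ?thesis by blast
    next
      assume "y mod 2^(n+1) = b"
      then have "y = b + 2^(n+1) * (y div 2^(n+1))" by (rule mod_decomp)
      then show ?thesis unfolding b_def by blast
    qed
  qed
  show "{1 + 2 ^ (n + 1) * k | k. True} \<union> {2 ^ n - 1 + 2 ^ (n + 1) * k | k. True} \<subseteq> two_adic_closure (pows (2 ^ n - 1))"
  proof
    fix y assume y: "y \<in> {1 + 2 ^ (n + 1) * k | k::nat. True} \<union> {2 ^ n - 1 + 2 ^ (n + 1) * k | k. True}"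
    have ob: "odd b" unfolding b_def using assms by simp
    have ib: "int b = 2^n - 1" unfolding b_def by (simp add: of_nat_diff)
    have ib2: "int (b^2) = 1 + 2^(n+1) * (2^(n-1) - 1)" using b_sq(1)[OF assms] unfolding b_def .
    have oc: "odd ((2::int)^(n-1) - 1)" using b_sq[OF assms] by blast
    have "odd y" using y
    proof
      assume "y \<in> {1 + 2 ^ (n + 1) * k | k::nat. True}"
      then obtain k where "y = 1 + 2 ^ (n + 1) * k" by blast
      then show ?thesis by simp
    next
      assume "y \<in> {2 ^ n - 1 + 2 ^ (n + 1) * k | k::nat. True}"
      then obtain k where "y = b + 2 ^ (n + 1) * k" unfolding b_def by blast
      then show ?thesis using ob by simp
    qed
    moreover have "\<exists>s\<in>pows b. [s = y] (mod 2 ^ m)" for m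
      using y
    proof
      assume "y \<in> {1 + 2 ^ (n + 1) * k | k::nat. True}"
      then obtain k where yk: "y = 1 + 2 ^ (n + 1) * k" by blast
      have "(2::int)^(n+1) dvd (int y - 1)" using yk by simp
      moreover have "n + 1 \<ge> 2" using assms by simp
      ultimately obtain j where j: "j \<ge> 1" "(2::int)^m dvd (1 * (1 + 2^(n+1)*(2^(n-1) - 1))^j - int y)"
        using cover[of "n+1" "2^(n-1) - 1" 1 "int y" m] oc by auto
      have e: "int (b^(2*j)) = (1 + 2^(n+1)*(2^(n-1)-1))^j"
        unfolding power_mult of_nat_power[of "b^2" j, symmetric] ib2[symmetric] by simp
      have "(2::int)^m dvd (int (b^(2*j)) - int y)" unfolding e using j(2) by simp
      then have "[b^(2*j) = y] (mod 2^m)" by (rule dvd_to_cong)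
      moreover have "b^(2*j) \<in> pows b" using j(1) unfolding pows_def by (intro CollectI exI[of _ "2*j"]) simp
      ultimately show ?thesis by blast
    next
      assume "y \<in> {2 ^ n - 1 + 2 ^ (n + 1) * k | k::nat. True}"
      then obtain k where yk: "y = b + 2 ^ (n + 1) * k" unfolding b_def by blast
      have "(2::int)^(n+1) dvd (int y - int b)" using yk by simp
      moreover have "n + 1 \<ge> 2" using assms by simp
      moreover have "odd (int b)" using ob by simp
      ultimately obtain j where j: "j \<ge> 1" "(2::int)^m dvd (int b * (1 + 2^(n+1)*(2^(n-1) - 1))^j - int y)"
        using cover[of "n+1" "2^(n-1) - 1" "int b" "int y" m] oc by blast
      have e: "int (b^(2*j+1)) = int b * (1 + 2^(n+1)*(2^(n-1)-1))^j"
        unfolding ib2[symmetric] by (simp add: power_mult)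
      have "(2::int)^m dvd (int (b^(2*j+1)) - int y)" unfolding e using j(2) by simp
      then have "[b^(2*j+1) = y] (mod 2^m)" by (rule dvd_to_cong)
      moreover have "b^(2*j+1) \<in> pows b" unfolding pows_def by (intro CollectI exI[of _ "2*j+1"]) simp
      ultimately show ?thesis by blast
    qed
    ultimately have "y \<in> two_adic_closure (pows b)"
      unfolding two_adic_closure_def by blast
    then show "y \<in> two_adic_closure (pows (2 ^ n - 1))" unfolding b_def .
  qed
qed


lemma mod_form: "r < M \<Longrightarrow> (r + M*k) mod (M*c) = M*(k mod c) + r" for r M k c :: nat
proof -
  assume r: "r < M"
  have "(r + M*k) mod (M*c) = M * ((r + M*k) div M mod c) + (r + M*k) mod M"
    by (rule mod_mult2_eq)
  also have "(r + M*k) div M = k" using r by simp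
  also have "(r + M*k) mod M = r" using r by simp
  finally show ?thesis .
qed

lemma img_form:
  fixes r M c :: nat
  assumes "r < M" "c > 0"
  shows "(\<lambda>x. x mod (M*c)) ` {r + M*k | k. True} = (\<lambda>i. r + M*i) ` {..<c}"
proof
  show "(\<lambda>x. x mod (M*c)) ` {r + M*k | k. True} \<subseteq> (\<lambda>i. r + M*i) ` {..<c}"
  proof
    fix z assume "z \<in> (\<lambda>x. x mod (M*c)) ` {r + M*k | k. True}"
    then obtain k where "z = (r + M*k) mod (M*c)" by blast
    then have "z = r + M * (k mod c)" using mod_form[OF assms(1)] by simp
    moreover have "k mod c < c" using assms(2) by simp
    ultimately show "z \<in> (\<lambda>i. r + M*i) ` {..<c}" by blast
  qed
  show "(\<lambda>i. r + M*i) ` {..<c} \<subseteq> (\<lambda>x. x mod (M*c)) ` {r + M*k | k. True}"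
  proof
    fix z assume "z \<in> (\<lambda>i. r + M*i) ` {..<c}"
    then obtain i where i: "i < c" "z = r + M*i" by blast
    then have "z = (r + M*i) mod (M*c)" using mod_form[OF assms(1), of i c] by simp
    then show "z \<in> (\<lambda>x. x mod (M*c)) ` {r + M*k | k. True}" by blast
  qed
qed

lemma card_form: "M > 0 \<Longrightarrow> card ((\<lambda>i. r + M*i) ` {..<c}) = c" for M r c :: nat
  by (subst card_image) (auto simp: inj_on_def)

lemma iX:
  assumes "n \<ge> 2"
  shows "i_of {1 + 2 ^ n * k | k. True} = 2 ^ (n - 1)"
proof -
  define X where "X = {1 + 2 ^ n * k | k::nat. True}"
  have one: "(1::nat) < 2^n" using assms by (intro one_less_power) auto
  have XR: "X = {x. x \<ge> 1 \<and> x mod 2^n \<in> {1}}"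
  proof (rule equalityI; rule subsetI)
    fix x assume "x \<in> X"
    then obtain k where "x = 1 + 2^n*k" unfolding X_def by blast
    moreover have "(1 + 2^n*k) mod 2^n = 1" using one by (metis mod_less mod_mult_self2 mult.commute)
    ultimately show "x \<in> {x. x \<ge> 1 \<and> x mod 2^n \<in> {1}}" by simp
  next
    fix x assume "x \<in> {x. x \<ge> 1 \<and> x mod 2^n \<in> {1::nat}}"
    then have "x mod 2^n = 1" by simp
    then have "x = 1 + 2^n * (x div 2^n)" by (rule mod_decomp)
    then show "x \<in> X" unfolding X_def by blast
  qed
  have p2: "pi_img (n+2) X = (\<lambda>i. 1 + 2^n*i) ` {..<4}"
  proof -
    have e: "(2::nat)^(n+2) = 2^n * 4" by (simp add: power_add)
    show ?thesis unfolding pi_img_def X_def e by (rule img_form[OF one]) simp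
  qed
  have c4: "card (pi_img (n+2) X) = 4" unfolding p2 by (rule card_form) simp
  have p1: "pi_img (n+1) X = (\<lambda>i. 1 + 2^n*i) ` {..<2}"
  proof -
    have e: "(2::nat)^(n+1) = 2^n * 2" by (simp add: power_add)
    show ?thesis unfolding pi_img_def X_def e by (rule img_form[OF one]) simp
  qed
  have "\<forall>x\<in>X. x mod 2^(n+1) \<in> (\<lambda>i. 1 + 2^n*i) ` {..<2::nat}"
    using p1 unfolding pi_img_def by blast
  then have R': "\<forall>x\<in>X. x mod 2^(n+2-1) \<in> (\<lambda>i. 1 + 2^n*i) ` {..<2::nat}" by simp
  have "n_of X = n + 2"
  proof (rule n_of_eq[OF XR, where R' = "(\<lambda>i. 1 + 2^n*i) ` {..<2::nat}"])
    show "card ((\<lambda>i. 1 + 2^n*i) ` {..<2::nat}) \<le> 2" using card_form[of "2^n" 1 2] by simp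
  next
    show "n \<le> n + 2" by simp
  next
    show "n + 2 \<ge> 1" by simp
  next
    show "\<forall>x\<in>X. x mod 2^(n+2-1) \<in> (\<lambda>i. 1 + 2^n*i) ` {..<2::nat}" by (rule R')
  next
    show "finite ((\<lambda>i. 1 + 2^n*i) ` {..<2::nat})" by simp
  next
    show "card (pi_img (n+2) X) \<ge> 3" using c4 by simp
  qed
  then have "i_of X = card (units_mod (n+2)) div 4" unfolding i_of_def using c4 by simp
  also have "\<dots> = 2^(n+1) div 4" using units_card[of "n+2"] by simp
  also have "\<dots> = 2^(n-1)"
  proof -
    obtain r where r: "n = Suc (Suc r)" using assms by (metis add_2_eq_Suc le_Suc_ex)
    have "(2::nat)^(n+1) = 2^(n-1) * 4" unfolding r by simp
    then show ?thesis by simp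
  qed
  finally show ?thesis unfolding X_def .
qed


lemma iY:
  assumes "n \<ge> 2"
  shows "i_of ({1 + 2 ^ (n + 1) * k | k. True} \<union> {2 ^ n - 1 + 2 ^ (n + 1) * k | k. True}) = 2 ^ (n - 1)"
proof -
  define b :: nat where "b = 2^n - 1"
  define M :: nat where "M = 2^(n+1)"
  define Y where "Y = {1 + M * k | k::nat. True} \<union> {b + M * k | k. True}"
  obtain r where r: "n = Suc (Suc r)" using assms by (metis add_2_eq_Suc le_Suc_ex)
  have one: "1 < M" unfolding M_def by (rule one_less_power) simp_all
  have "(2::nat)^n < 2^(n+1)" by simp
  then have blt: "b < M" unfolding b_def M_def by linarith
  have b3: "b \<ge> 3" unfolding b_def r
  proof -
    have "(4::nat) \<le> 2^Suc (Suc r)" by simp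
    then show "3 \<le> 2 ^ Suc (Suc r) - (1::nat)" by linarith
  qed
  have m1: "(1 + M*k) mod M = 1" for k using one by (metis mod_less mod_mult_self2 mult.commute)
  have mb: "(b + M*k) mod M = b" for k using blt by (metis mod_less mod_mult_self2 mult.commute)
  have YR: "Y = {x. x \<ge> 1 \<and> x mod 2^(n+1) \<in> {1, b}}"
  proof (rule equalityI; rule subsetI)
    fix x assume "x \<in> Y"
    then obtain k where "x = 1 + M*k \<or> x = b + M*k" unfolding Y_def by blast
    then show "x \<in> {x. x \<ge> 1 \<and> x mod 2^(n+1) \<in> {1, b}}"
      using m1 mb b3 unfolding M_def by auto
  next
    fix x assume "x \<in> {x. x \<ge> 1 \<and> x mod 2^(n+1) \<in> {1::nat, b}}"
    then have "x mod M = 1 \<or> x mod M = b" unfolding M_def by simp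
    then show "x \<in> Y"
    proof
      assume "x mod M = 1"
      then have "x = 1 + M * (x div M)" by (rule mod_decomp)
      then show "x \<in> Y" unfolding Y_def by blast
    next
      assume "x mod M = b"
      then have "x = b + M * (x div M)" by (rule mod_decomp)
      then show "x \<in> Y" unfolding Y_def by blast
    qed
  qed
  have e: "(2::nat)^(n+2) = M * 2" unfolding M_def by (simp add: power_add)
  have p2: "pi_img (n+2) Y = (\<lambda>i. 1 + M*i) ` {..<2} \<union> (\<lambda>i. b + M*i) ` {..<2}"
    unfolding pi_img_def Y_def e image_Un
    using img_form[OF one, of 2] img_form[OF blt, of 2] by simp
  have disj: "(\<lambda>i. 1 + M*i) ` {..<2} \<inter> (\<lambda>i. b + M*i) ` {..<2} = {}"
  proof (rule ccontr)
    assume "(\<lambda>i. 1 + M*i) ` {..<2} \<inter> (\<lambda>i. b + M*i) ` {..<2} \<noteq> {}"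
    then obtain i j where "1 + M*i = b + M*j" by blast
    then have "(1 + M*i) mod M = (b + M*j) mod M" by simp
    then have "1 = b" using m1 mb by simp
    then show False using b3 by simp
  qed
  have M0: "M > 0" using one by simp
  have c4: "card (pi_img (n+2) Y) = 4"
    unfolding p2 using card_Un_disjoint[OF _ _ disj] card_form[OF M0, of 1 2] card_form[OF M0, of b 2]
    by simp
  have "n_of Y = n + 2"
  proof (rule n_of_eq[OF YR, where R' = "{1, b}"])
    show "card {1, b} \<le> 2" using b3 by simp
  next
    show "n + 1 \<le> n + 2" by simp
  next
    show "n + 2 \<ge> 1" by simp
  next
    show "\<forall>x\<in>Y. x mod 2^(n+2-1) \<in> {1, b}" using YR by simp
  next
    show "finite {1, b}" by simp
  next
    show "card (pi_img (n+2) Y) \<ge> 3" using c4 by simp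
  qed
  then have "i_of Y = card (units_mod (n+2)) div 4" unfolding i_of_def using c4 by simp
  also have "\<dots> = 2^(n+1) div 4" using units_card[of "n+2"] by simp
  also have "\<dots> = 2^(n-1)"
  proof -
    have "(2::nat)^(n+1) = 2^(n-1) * 4" unfolding r by simp
    then show ?thesis by simp
  qed
  finally show ?thesis unfolding Y_def M_def b_def .
qed

theorem lemma4p7:
  fixes n :: nat
  assumes "n \<ge> 2"
  shows "two_adic_closure (pows (1 + 2 ^ n)) = {1 + 2 ^ n * k | k. True}
         \<and> i_of (two_adic_closure (pows (1 + 2 ^ n))) = 2 ^ (n - 1)
         \<and> two_adic_closure (pows (2 ^ n - 1)) =
             {1 + 2 ^ (n + 1) * k | k. True} \<union> {2 ^ n - 1 + 2 ^ (n + 1) * k | k. True}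
         \<and> i_of (two_adic_closure (pows (2 ^ n - 1))) = 2 ^ (n - 1)"
  using closX[OF assms] closY[OF assms] iX[OF assms] iY[OF assms] by simp

end
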